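(* Assume AS.1, AS.3, AS.4 and AS.5, and consider a realization of the SKOFFAR$p$ algorithm in which $\mathcal K_1$ occurs. Then $$f(x_{k_1})\le f_{\max}\stackrel{\rm def}{=} f(x_0)+\frac{1}{(p+1)!}\left(\frac{L_p}{\sigma_0}\nu_{\max}+\vartheta\sigma_0\right),$$ where $\sigma_0=\nu_0$ and $$\nu_{\max}=\frac{2L_p}{\vartheta}\left[1+\left(2\eta+2\left(\frac{(p+1)!\,\kappa_g}{\vartheta\nu_0}\right)^{1/p}\right)^{p+1}\right],\qquad \eta=\sum_{i=2}^{p}\left[\frac{\kappa_{\rm high}(p+1)!}{i!\,\vartheta\nu_0}\right]^{\frac{1}{p-i+1}}$$ (with $\eta=0$ when $p=1$).
   Context: Let $f:\mathbb{R}^n\to\mathbb{R}$ and $p\ge1$ an integer; $\|\cdot\|$ is the Euclidean norm for vectors, the spectral norm for matrices and the induced (subordinate) norm for tensors; $T[d]^i$ denotes a symmetric $i$-tensor applied to $i$ copies of $d$. Assumptions: AS.1: $f$ is $p$ times continuously differentiable on $\mathbb{R}^n$. AS.3: there is $L_p\ge 0$ with $\|\nabla^p f(x)-\nabla^p f(y)\|\le L_p\|x-y\|$ for all $x,y$. AS.4: there is $\kappa_g\ge0$ with $\|\nabla f(x)\|\le\kappa_g$ for all $x$. AS.5: if $p>1$ there is $\kappa_{\rm high}\ge0$ with $\min_{\|d\|\le1}\nabla^i f(x)[d]^i\ge-\kappa_{\rm high}$ for all $x$ and $i\in\{2,\dots,p\}$ (set $\kappa_{\rm high}=0$ if $p=1$).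 For $x,s\in\mathbb{R}^n$ let $T_{f,p}(x,s)=f(x)+\sum_{i=1}^p\frac{1}{i!}\nabla^i f(x)[s]^i$. Write $g_k=\nabla f(x_k)$. The SKOFFAR$p$ algorithm: given $x_0\in\mathbb{R}^n$, $\nu_0>0$, $\epsilon\in(0,1]$, $\theta>1$, $\mu_{-1}\ge 0$, $\vartheta\in(0,1)$ and a fixed distribution $\mathcal S$ of $\ell\times n$ random matrices ($\ell<n$), for $k=0,1,2,\dots$: (i) if $k=0$ set $\sigma_0=\nu_0$; otherwise choose $\sigma_k\in[\vartheta\nu_k,\max(\nu_k,\mu_k)]$, where $\mu_k=\max\Big[\mu_{k-1},\frac{\|S_{k-1}g_k\|-\|\nabla_{\hat s}\widehat T_{k-1}(\hat s_{k-1})\|}{\kappa_{S,k-1}\|s_{k-1}\|^p}\Big]$ for some number $\kappa_{S,k-1}\ge\|S_{k-1}\|$; (ii) draw $S_k\in\mathbb{R}^{\ell\times n}$ from $\mathcal S$, define for $\hat s\in\mathbb{R}^\ell$ the sketched Taylor model $\widehat T_k(\hat s)=T_{f,p}(x_k,S_k^T\hat s)$ and the sketched model $\widehat m_k(\hat s)=\widehat T_k(\hat s)+\frac{\sigma_k}{(p+1)!}\|S_k^T\hat s\|^{p+1}$, and compute $\hat s_k\in\mathbb{R}^\ell$ with $\widehat m_k(\hat s_k)<\widehat m_k(0)$ and $\|\nabla_{\hat s}\widehat T_k(\hat s_k)\|\le\theta\frac{\sigma_k}{p!}\|S_k^T\hat s_k\|^{p-1}\|S_kS_k^T\hat s_k\|$;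 set $s_k=S_k^T\hat s_k$; (iii) set $x_{k+1}=x_k+s_k$ and $\nu_{k+1}=\nu_k+\nu_k\|s_k\|^{p+1}$. Define $k_1=\inf\{k\ge1:\nu_k\ge 2L_p/\vartheta\}$ and let $\mathcal K_1$ be the event that $k_1<\infty$. *)

theory Defs
  imports "HOL-Analysis.Analysis"
begin

text \<open>Symmetric i-tensors on R^n are represented as multilinear forms
  T :: (nat => real^'n) => real, applied to the argument vectors vs 0, ..., vs (i-1).
  T[d]^i is T (\<lambda>_. d).\<close>

text \<open>Induced (subordinate) norm of an i-tensor.\<close>
definition tnorm :: "nat \<Rightarrow> ((nat \<Rightarrow> real^'n) \<Rightarrow> real) \<Rightarrow> real" where
  "tnorm i T = (SUP vs \<in> {vs. \<forall>j<i. norm (vs j) \<le> 1}. \<bar>T vs\<bar>)"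

text \<open>D is the tower of derivatives of f up to order p: D 0 x = f x, and
  D (i+1) x is the Frechet derivative of D i (in the new slot i), for i < p.
  Such a tower is unique if it exists.\<close>
definition deriv_tower :: "nat \<Rightarrow> (real^'n \<Rightarrow> real) \<Rightarrow>
    (nat \<Rightarrow> real^'n \<Rightarrow> (nat \<Rightarrow> real^'n) \<Rightarrow> real) \<Rightarrow> bool" where
  "deriv_tower p f D \<longleftrightarrow>
     (\<forall>x vs. D 0 x vs = f x) \<and>
     (\<forall>i<p. \<forall>x vs. ((\<lambda>y. D i y vs) has_derivative (\<lambda>h. D (Suc i) x (vs(i := h)))) (at x))"

text \<open>AS.1: f is p times continuously differentiable, with derivative tensors D.\<close>
definition AS1 :: "nat \<Rightarrow> (real^'n \<Rightarrow> real) \<Rightarrow>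
    (nat \<Rightarrow> real^'n \<Rightarrow> (nat \<Rightarrow> real^'n) \<Rightarrow> real) \<Rightarrow> bool" where
  "AS1 p f D \<longleftrightarrow> deriv_tower p f D \<and>
     (\<forall>x. ((\<lambda>y. tnorm p (\<lambda>vs. D p y vs - D p x vs)) \<longlongrightarrow> 0) (at x))"

text \<open>Gradient (library notion GDERIV).\<close>
definition grad :: "('a::real_inner \<Rightarrow> real) \<Rightarrow> 'a \<Rightarrow> 'a" where
  "grad h y = (THE G. GDERIV h y :> G)"

text \<open>Taylor polynomial T_{f,p}(x,s).\<close>
definition taylor :: "nat \<Rightarrow> (real^'n \<Rightarrow> real) \<Rightarrow>
    (nat \<Rightarrow> real^'n \<Rightarrow> (nat \<Rightarrow> real^'n) \<Rightarrow> real) \<Rightarrow> real^'n \<Rightarrow> real^'n \<Rightarrow> real" where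
  "taylor p f D x s = f x + (\<Sum>i=1..p. D i x (\<lambda>_. s) / fact i)"

text \<open>Sketched Taylor model  hatT_k(sh) = T_{f,p}(x_k, S_k^T sh).\<close>
definition sk_taylor :: "nat \<Rightarrow> (real^'n \<Rightarrow> real) \<Rightarrow>
    (nat \<Rightarrow> real^'n \<Rightarrow> (nat \<Rightarrow> real^'n) \<Rightarrow> real) \<Rightarrow> real^'n \<Rightarrow> real^'n^'l \<Rightarrow> real^'l \<Rightarrow> real" where
  "sk_taylor p f D x S sh = taylor p f D x (transpose S *v sh)"

text \<open>Sketched regularized model hatm_k.\<close>
definition sk_model :: "nat \<Rightarrow> (real^'n \<Rightarrow> real) \<Rightarrow>
    (nat \<Rightarrow> real^'n \<Rightarrow> (nat \<Rightarrow> real^'n) \<Rightarrow> real) \<Rightarrow> real^'n \<Rightarrow> real^'n^'l \<Rightarrow> real \<Rightarrow> real^'l \<Rightarrow> real" where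
  "sk_model p f D x S \<sigma> sh = sk_taylor p f D x S sh + \<sigma> / fact (p+1) * norm (transpose S *v sh) ^ (p+1)"

text \<open>A realization of SKOFFARp.  mu 0 plays the role of mu_{-1} (mu_0 = mu_{-1},
  no update at k = 0), mu k for k >= 1 is mu_k.\<close>
definition skoffar_run :: "nat \<Rightarrow> (real^'n \<Rightarrow> real) \<Rightarrow>
    (nat \<Rightarrow> real^'n \<Rightarrow> (nat \<Rightarrow> real^'n) \<Rightarrow> real) \<Rightarrow> real \<Rightarrow> real \<Rightarrow> real \<Rightarrow> real \<Rightarrow>
    (nat \<Rightarrow> real^'n) \<Rightarrow> (nat \<Rightarrow> real) \<Rightarrow> (nat \<Rightarrow> real) \<Rightarrow> (nat \<Rightarrow> real) \<Rightarrow> (nat \<Rightarrow> real) \<Rightarrow>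
    (nat \<Rightarrow> real^'n^'l) \<Rightarrow> (nat \<Rightarrow> real^'l) \<Rightarrow> bool" where
  "skoffar_run p f D \<nu>0 \<epsilon> \<theta> vth x \<sigma> \<nu> \<mu> \<kappa>S S sh \<longleftrightarrow>
     \<nu>0 > 0 \<and> 0 < \<epsilon> \<and> \<epsilon> \<le> 1 \<and> \<theta> > 1 \<and> 0 < vth \<and> vth < 1 \<and> \<mu> 0 \<ge> 0 \<and>
     \<nu> 0 = \<nu>0 \<and> \<sigma> 0 = \<nu>0 \<and>
     (\<forall>k\<ge>1. \<kappa>S (k-1) \<ge> onorm ((*v) (S (k-1))) \<and>
        \<mu> k = max (\<mu> (k-1))
          ((norm (S (k-1) *v grad f (x k)) - norm (grad (sk_taylor p f D (x (k-1)) (S (k-1))) (sh (k-1))))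
            / (\<kappa>S (k-1) * norm (transpose (S (k-1)) *v sh (k-1)) ^ p)) \<and>
        vth * \<nu> k \<le> \<sigma> k \<and> \<sigma> k \<le> max (\<nu> k) (\<mu> k)) \<and>
     (\<forall>k. sk_model p f D (x k) (S k) (\<sigma> k) (sh k) < sk_model p f D (x k) (S k) (\<sigma> k) 0 \<and>
        norm (grad (sk_taylor p f D (x k) (S k)) (sh k))
          \<le> \<theta> * \<sigma> k / fact p * norm (transpose (S k) *v sh k) ^ (p-1)
              * norm (S k *v (transpose (S k) *v sh k)) \<and>
        x (Suc k) = x k + transpose (S k) *v sh k \<and>
        \<nu> (Suc k) = \<nu> k + \<nu> k * norm (transpose (S k) *v sh k) ^ (p+1))"

end

theory Submission
  imports Defs
begin

definition ml_dep :: "nat \<Rightarrow> ((nat \<Rightarrow> 'a) \<Rightarrow> real) \<Rightarrow> bool" where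
  "ml_dep m T \<longleftrightarrow> (\<forall>vs vs'. (\<forall>j<m. vs j = vs' j) \<longrightarrow> T vs = T vs')"
definition ml_lin :: "nat \<Rightarrow> ((nat \<Rightarrow> 'a::real_vector) \<Rightarrow> real) \<Rightarrow> bool" where
  "ml_lin m T \<longleftrightarrow> (\<forall>j<m. \<forall>vs. linear (\<lambda>h. T (vs(j:=h))))"

lemma ml_depD: "ml_dep m T \<Longrightarrow> (\<And>j. j < m \<Longrightarrow> vs j = vs' j) \<Longrightarrow> T vs = T vs'"
  unfolding ml_dep_def by blast

lemma tower_struct:
  assumes DT: "deriv_tower p f D"
  shows "i \<le> p \<Longrightarrow> \<forall>y. ml_dep i (D i y) \<and> ml_lin i (D i y)"
proof (induction i)
  case 0
  then show ?case using DT by (simp add: ml_dep_def ml_lin_def deriv_tower_def)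
next
  case (Suc i)
  hence ip: "i < p" by simp
  have IH: "\<And>y. ml_dep i (D i y)" "\<And>y. ml_lin i (D i y)" using Suc by auto
  have der: "\<And>y vs. ((\<lambda>z. D i z vs) has_derivative (\<lambda>h. D (Suc i) y (vs(i := h)))) (at y)"
    using DT ip by (simp add: deriv_tower_def)
  show ?case
  proof (intro allI conjI)
    fix y
    show "ml_dep (Suc i) (D (Suc i) y)"
      unfolding ml_dep_def
    proof (intro allI impI)
      fix vs vs' :: "nat \<Rightarrow> real^'a"
      assume ag: "\<forall>j<Suc i. vs j = vs' j"
      have eqf: "(\<lambda>z. D i z vs) = (\<lambda>z. D i z vs')"
        using IH(1) ag unfolding ml_dep_def by auto
      have d': "((\<lambda>z. D i z vs) has_derivative (\<lambda>h. D (Suc i) y (vs'(i := h)))) (at y)"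
        using der[of vs' y] eqf by simp
      have "(\<lambda>h. D (Suc i) y (vs(i := h))) = (\<lambda>h. D (Suc i) y (vs'(i := h)))"
        using has_derivative_unique[OF der[of vs y] d'] .
      hence "D (Suc i) y (vs(i := vs i)) = D (Suc i) y (vs'(i := vs i))" by (rule fun_cong)
      moreover have "vs'(i := vs i) = vs'" using ag by auto
      ultimately show "D (Suc i) y vs = D (Suc i) y vs'" by simp
    qed
    show "ml_lin (Suc i) (D (Suc i) y)"
      unfolding ml_lin_def
    proof (intro allI impI)
      fix j vs assume j: "j < Suc i"
      show "linear (\<lambda>h. D (Suc i) y (vs(j := h)))"
      proof (cases "j = i")
        case True
        then show ?thesis using der[of vs y] has_derivative_linear by blast
      next
        case False
        hence ji: "j < i" "j \<noteq> i" using j by auto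
        show ?thesis
        proof (rule linearI)
          fix u w :: "real^'a"
          have lin: "linear (\<lambda>h. D i z (vs(j := h)))" for z using IH(2) ji unfolding ml_lin_def by auto
          have e1: "(\<lambda>z. D i z (vs(j := u + w))) = (\<lambda>z. D i z (vs(j := u)) + D i z (vs(j := w)))"
            by (rule ext) (use linear_add[OF lin] in simp)
          have d2: "((\<lambda>z. D i z (vs(j := u)) + D i z (vs(j := w))) has_derivative
              (\<lambda>h. D (Suc i) y (vs(j := u, i := h)) + D (Suc i) y (vs(j := w, i := h)))) (at y)"
            by (intro has_derivative_add der)
          have d2': "((\<lambda>z. D i z (vs(j := u + w))) has_derivative
              (\<lambda>h. D (Suc i) y (vs(j := u, i := h)) + D (Suc i) y (vs(j := w, i := h)))) (at y)"
            using d2 e1 by simp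
          have "(\<lambda>h. D (Suc i) y (vs(j := u + w, i := h))) = (\<lambda>h. D (Suc i) y (vs(j := u, i := h)) + D (Suc i) y (vs(j := w, i := h)))"
            using has_derivative_unique[OF der[of "vs(j := u + w)" y] d2'] .
          from fun_cong[OF this, of "vs i"] have "D (Suc i) y (vs(j := u + w, i := vs i)) = D (Suc i) y (vs(j := u, i := vs i)) + D (Suc i) y (vs(j := w, i := vs i))"
            by simp
          moreover have "\<And>a. vs(j := a, i := vs i) = vs(j := a)" using ji by (auto simp: fun_eq_iff)
          ultimately show "D (Suc i) y (vs(j := u + w)) = D (Suc i) y (vs(j := u)) + D (Suc i) y (vs(j := w))" by simp
        next
          fix c :: real and u :: "real^'a"
          have lin: "linear (\<lambda>h. D i z (vs(j := h)))" for z using IH(2) ji unfolding ml_lin_def by auto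
          have e1: "(\<lambda>z. D i z (vs(j := c *\<^sub>R u))) = (\<lambda>z. c * D i z (vs(j := u)))"
            by (rule ext) (use linear_scale[OF lin] in simp)
          have d2: "((\<lambda>z. c * D i z (vs(j := u))) has_derivative
              (\<lambda>h. c * D (Suc i) y (vs(j := u, i := h)))) (at y)"
            by (intro has_derivative_mult_right der)
          have d2': "((\<lambda>z. D i z (vs(j := c *\<^sub>R u))) has_derivative
              (\<lambda>h. c * D (Suc i) y (vs(j := u, i := h)))) (at y)"
            using d2 e1 by simp
          have "(\<lambda>h. D (Suc i) y (vs(j := c *\<^sub>R u, i := h))) = (\<lambda>h. c * D (Suc i) y (vs(j := u, i := h)))"
            using has_derivative_unique[OF der[of "vs(j := c *\<^sub>R u)" y] d2'] .
          from fun_cong[OF this, of "vs i"] have "D (Suc i) y (vs(j := c *\<^sub>R u, i := vs i)) = c * D (Suc i) y (vs(j := u, i := vs i))"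
            by simp
          moreover have "\<And>a. vs(j := a, i := vs i) = vs(j := a)" using ji by (auto simp: fun_eq_iff)
          ultimately show "D (Suc i) y (vs(j := c *\<^sub>R u)) = c *\<^sub>R D (Suc i) y (vs(j := u))" by simp
        qed
      qed
    qed
  qed
qed

lemma ml_homog_aux:
  assumes lin: "ml_lin m T" and k: "k \<le> m"
  shows "T (\<lambda>j. if j < k then c *\<^sub>R u else u) = c ^ k * T (\<lambda>_. u)"
  using k
proof (induction k)
  case 0 then show ?case by simp
next
  case (Suc k)
  let ?v = "\<lambda>j. if j < k then c *\<^sub>R u else u"
  have e: "(\<lambda>j. if j < Suc k then c *\<^sub>R u else u) = ?v(k := c *\<^sub>R u)"
    by (rule ext) (simp add: less_Suc_eq)
  have l: "linear (\<lambda>h. T (?v(k := h)))" using lin Suc.prems unfolding ml_lin_def by auto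
  have "T (?v(k := c *\<^sub>R u)) = c * T (?v(k := u))"
    using linear_scale[OF l, of c u] by simp
  moreover have "?v(k := u) = ?v" by (auto simp: fun_eq_iff)
  ultimately show ?case using e Suc by simp
qed

lemma ml_homog:
  assumes dep: "ml_dep m T" and lin: "ml_lin m T"
  shows "T (\<lambda>_. c *\<^sub>R u) = c ^ m * T (\<lambda>_. u)"
proof -
  have "T (\<lambda>_. c *\<^sub>R u) = T (\<lambda>j. if j < m then c *\<^sub>R u else u)"
    using dep unfolding ml_dep_def by auto
  also have "\<dots> = c ^ m * T (\<lambda>_. u)" using ml_homog_aux[OF lin, of m] by simp
  finally show ?thesis .
qed

lemma ml_bounded:
  fixes T :: "(nat \<Rightarrow> 'a::euclidean_space) \<Rightarrow> real"
  shows "ml_dep m T \<Longrightarrow> ml_lin m T \<Longrightarrow> \<exists>C. \<forall>vs. (\<forall>j<m. norm (vs j) \<le> 1) \<longrightarrow> \<bar>T vs\<bar> \<le> C"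
proof (induction m arbitrary: T)
  case 0
  have "\<And>vs. T vs = T (\<lambda>_. 0)" using 0(1) unfolding ml_dep_def by simp
  then show ?case by (intro exI[of _ "\<bar>T (\<lambda>_. 0)\<bar>"] allI impI eq_refl arg_cong[where f=abs])
next
  case (Suc m)
  have CB: "\<forall>b\<in>Basis. \<exists>C. \<forall>vs. (\<forall>j<m. norm (vs j) \<le> 1) \<longrightarrow> \<bar>T (vs(m := b))\<bar> \<le> C"
  proof
    fix b :: 'a
    have d: "ml_dep m (\<lambda>vs. T (vs(m := b)))"
      unfolding ml_dep_def
    proof (intro allI impI)
      fix vs vs' :: "nat \<Rightarrow> 'a" assume a: "\<forall>j<m. vs j = vs' j"
      show "T (vs(m := b)) = T (vs'(m := b))"
        by (rule ml_depD[OF Suc.prems(1)]) (use a in \<open>auto simp: less_Suc_eq\<close>)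
    qed
    have l: "ml_lin m (\<lambda>vs. T (vs(m := b)))"
      unfolding ml_lin_def
    proof (intro allI impI)
      fix j vs assume j: "j < m"
      have "(\<lambda>h. T (vs(j := h, m := b))) = (\<lambda>h. T ((vs(m := b))(j := h)))"
        using j by (intro ext arg_cong[where f=T]) (auto simp: fun_eq_iff)
      moreover have "linear (\<lambda>h. T ((vs(m := b))(j := h)))"
        using Suc.prems(2) j unfolding ml_lin_def by auto
      ultimately show "linear (\<lambda>h. T (vs(j := h, m := b)))" by simp
    qed
    show "\<exists>C. \<forall>vs. (\<forall>j<m. norm (vs j) \<le> 1) \<longrightarrow> \<bar>T (vs(m := b))\<bar> \<le> C"
      using Suc.IH[OF d l] by (simp only:)
  qed
  obtain Cf where Cf: "\<And>b vs. b \<in> Basis \<Longrightarrow> (\<forall>j<m. norm (vs j) \<le> 1) \<Longrightarrow> \<bar>T (vs(m := b))\<bar> \<le> Cf b"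
  proof -
    from bchoice[OF CB] obtain Cf where "\<forall>b\<in>Basis. \<forall>vs. (\<forall>j<m. norm (vs j) \<le> 1) \<longrightarrow> \<bar>T (vs(m := b))\<bar> \<le> Cf b"
      by blast
    then show ?thesis using that by blast
  qed
  show ?case
  proof (intro exI allI impI)
    fix vs :: "nat \<Rightarrow> 'a"
    assume n: "\<forall>j<Suc m. norm (vs j) \<le> 1"
    have l: "linear (\<lambda>h. T (vs(m := h)))" using Suc.prems(2) unfolding ml_lin_def by auto
    have "T vs = T (vs(m := (\<Sum>b\<in>Basis. (vs m \<bullet> b) *\<^sub>R b)))"
      by (simp add: euclidean_representation)
    also have "\<dots> = (\<Sum>b\<in>Basis. (vs m \<bullet> b) * T (vs(m := b)))"
    proof -
      have "T (vs(m := (\<Sum>b\<in>Basis. (vs m \<bullet> b) *\<^sub>R b))) = (\<Sum>b\<in>Basis. T (vs(m := (vs m \<bullet> b) *\<^sub>R b)))"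
        using linear_sum[OF l, of "\<lambda>b. (vs m \<bullet> b) *\<^sub>R b" Basis] by simp
      also have "\<dots> = (\<Sum>b\<in>Basis. (vs m \<bullet> b) * T (vs(m := b)))"
        by (rule sum.cong) (use linear_scale[OF l] in simp_all)
      finally show ?thesis .
    qed
    finally have "\<bar>T vs\<bar> \<le> (\<Sum>b\<in>Basis. \<bar>vs m \<bullet> b\<bar> * \<bar>T (vs(m := b))\<bar>)"
      by (simp add: sum_abs[THEN order_trans] abs_mult)
    also have "\<dots> \<le> (\<Sum>b\<in>Basis. Cf b)"
    proof (rule sum_mono)
      fix b :: 'a assume b: "b \<in> Basis"
      have "\<bar>vs m \<bullet> b\<bar> \<le> 1" using Basis_le_norm[OF b, of "vs m"] n by auto
      moreover have "\<bar>T (vs(m := b))\<bar> \<le> Cf b" using Cf[OF b] n by auto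
      ultimately show "\<bar>vs m \<bullet> b\<bar> * \<bar>T (vs(m := b))\<bar> \<le> Cf b"
        using mult_mono[of "\<bar>vs m \<bullet> b\<bar>" 1 "\<bar>T (vs(m := b))\<bar>" "Cf b"] by simp
    qed
    finally show "\<bar>T vs\<bar> \<le> (\<Sum>b\<in>Basis. Cf b)" .
  qed
qed

lemma ml_tnorm:
  fixes T :: "(nat \<Rightarrow> real^'n) \<Rightarrow> real" and u :: "real^'n"
  assumes dep: "ml_dep m T" and lin: "ml_lin m T" and u: "norm u \<le> 1"
  shows "\<bar>T (\<lambda>_. u)\<bar> \<le> tnorm m T"
proof -
  obtain C where C: "\<And>vs. (\<forall>j<m. norm (vs j) \<le> 1) \<Longrightarrow> \<bar>T vs\<bar> \<le> C"
    using ml_bounded[OF dep lin] by blast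
  show ?thesis unfolding tnorm_def
    by (rule cSUP_upper) (use u C in \<open>auto intro!: bdd_aboveI2\<close>)
qed

lemma ml_tnorm2:
  fixes T :: "(nat \<Rightarrow> real^'n) \<Rightarrow> real" and s :: "real^'n"
  assumes dep: "ml_dep m T" and lin: "ml_lin m T"
  shows "\<bar>T (\<lambda>_. s)\<bar> \<le> tnorm m T * norm s ^ m"
proof (cases "s = 0")
  case True
  show ?thesis
  proof (cases m)
    case 0
    then show ?thesis using ml_tnorm[OF dep lin, of 0] True by simp
  next
    case (Suc k)
    have "T (\<lambda>_. (0::real) *\<^sub>R s) = 0 ^ m * T (\<lambda>_. s)" by (rule ml_homog[OF dep lin])
    then show ?thesis using True Suc by simp
  qed
next
  case False
  let ?u = "(1 / norm s) *\<^sub>R s"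
  have nu: "norm ?u \<le> 1" using False by simp
  have "T (\<lambda>_. s) = T (\<lambda>_. norm s *\<^sub>R ?u)" using False by simp
  also have "\<dots> = norm s ^ m * T (\<lambda>_. ?u)" by (rule ml_homog[OF dep lin])
  finally have "\<bar>T (\<lambda>_. s)\<bar> = norm s ^ m * \<bar>T (\<lambda>_. ?u)\<bar>" by (simp add: abs_mult)
  also have "\<dots> \<le> norm s ^ m * tnorm m T"
    by (rule mult_left_mono[OF ml_tnorm[OF dep lin nu]]) simp
  finally show ?thesis by (simp add: mult.commute)
qed

lemma ml_diff:
  assumes "ml_dep m T" "ml_lin m T" "ml_dep m U" "ml_lin m U"
  shows "ml_dep m (\<lambda>vs. T vs - U vs)" "ml_lin m (\<lambda>vs. T vs - U vs)"
proof -
  show "ml_dep m (\<lambda>vs. T vs - U vs)" unfolding ml_dep_def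
  proof (intro allI impI)
    fix vs vs' :: "nat \<Rightarrow> 'a" assume "\<forall>j<m. vs j = vs' j"
    then show "T vs - U vs = T vs' - U vs'" using ml_depD[OF assms(1)] ml_depD[OF assms(3)] by metis
  qed
  show "ml_lin m (\<lambda>vs. T vs - U vs)"
    using assms(2,4) unfolding ml_lin_def by (auto intro!: linear_compose_sub)
qed

lemma poly_deriv:
  fixes c :: "nat \<Rightarrow> real"
  shows "DERIV (\<lambda>t. \<Sum>j\<le>n. c j * t ^ j / fact j) t :> (\<Sum>j<n. c (Suc j) * t ^ j / fact j)"
proof (induction n)
  case 0 then show ?case by simp
next
  case (Suc n)
  have d: "DERIV (\<lambda>t. c (Suc n) * t ^ Suc n / fact (Suc n)) t :> c (Suc n) * t ^ n / fact n"
  proof -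
    have "DERIV (\<lambda>t. t ^ Suc n) t :> real (Suc n) * t ^ n" using DERIV_pow[of "Suc n" t] by simp
    from DERIV_cdivide[OF DERIV_cmult[OF this, of "c (Suc n)"], of "fact (Suc n)"]
    have "DERIV (\<lambda>t. c (Suc n) * t ^ Suc n / fact (Suc n)) t :> c (Suc n) * (real (Suc n) * t ^ n) / fact (Suc n)" .
    moreover have "c (Suc n) * (real (Suc n) * t ^ n) / fact (Suc n) = c (Suc n) * t ^ n / fact n"
    proof -
      have "c (Suc n) * (real (Suc n) * t ^ n) / fact (Suc n) = (real (Suc n) * (c (Suc n) * t ^ n)) / (real (Suc n) * fact n)"
        by (metis fact_Suc mult.left_commute)
      also have "\<dots> = c (Suc n) * t ^ n / fact n" by (rule mult_divide_mult_cancel_left) simp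
      finally show ?thesis .
    qed
    ultimately show ?thesis by simp
  qed
  have "DERIV (\<lambda>t. (\<Sum>j\<le>n. c j * t ^ j / fact j) + c (Suc n) * t ^ Suc n / fact (Suc n)) t :>
        (\<Sum>j<n. c (Suc j) * t ^ j / fact j) + c (Suc n) * t ^ n / fact n"
    by (rule DERIV_add[OF Suc d])
  then show ?case by (simp add: add.commute)
qed

lemma sum_zero_pow: "(\<Sum>j\<le>N. g j * (0::real) ^ j / fact j) = g 0"
  by (induction N) auto

lemma tower_line_deriv:
  fixes D :: "nat \<Rightarrow> real^'n \<Rightarrow> (nat \<Rightarrow> real^'n) \<Rightarrow> real"
  assumes DT: "deriv_tower p f D" and m: "m < p"
  shows "DERIV (\<lambda>t. D m (x + t *\<^sub>R s) (\<lambda>_. s)) t :> D (Suc m) (x + t *\<^sub>R s) (\<lambda>_. s)"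
proof -
  let ?y = "x + t *\<^sub>R s"
  have der: "((\<lambda>z. D m z (\<lambda>_. s)) has_derivative (\<lambda>h. D (Suc m) ?y ((\<lambda>_. s)(m := h)))) (at ?y)"
    using DT m by (simp add: deriv_tower_def)
  have lin: "linear (\<lambda>h. D (Suc m) ?y ((\<lambda>_. s)(m := h)))" using has_derivative_linear[OF der] .
  have l: "((\<lambda>t. x + t *\<^sub>R s) has_derivative (\<lambda>\<tau>. \<tau> *\<^sub>R s)) (at t)"
    by (auto intro!: derivative_eq_intros)
  have "((\<lambda>t. D m (x + t *\<^sub>R s) (\<lambda>_. s)) has_derivative (\<lambda>\<tau>. D (Suc m) ?y ((\<lambda>_. s)(m := \<tau> *\<^sub>R s)))) (at t)"
    using has_derivative_compose[OF l der] by simp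
  moreover have "(\<lambda>\<tau>. D (Suc m) ?y ((\<lambda>_. s)(m := \<tau> *\<^sub>R s))) = (*) (D (Suc m) ?y (\<lambda>_. s))"
  proof
    fix \<tau> :: real
    have "D (Suc m) ?y ((\<lambda>_. s)(m := \<tau> *\<^sub>R s)) = \<tau> * D (Suc m) ?y ((\<lambda>_. s)(m := s))"
      using linear_scale[OF lin, of \<tau> s] by simp
    moreover have "(\<lambda>_. s)(m := s) = (\<lambda>_. s)" by auto
    ultimately show "D (Suc m) ?y ((\<lambda>_. s)(m := \<tau> *\<^sub>R s)) = D (Suc m) ?y (\<lambda>_. s) * \<tau>" by simp
  qed
  ultimately show ?thesis unfolding has_field_derivative_def by (simp only:)
qed

lemma taylor_bound:
  fixes D :: "nat \<Rightarrow> real^'n \<Rightarrow> (nat \<Rightarrow> real^'n) \<Rightarrow> real"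
  assumes DT: "deriv_tower p f D" and p1: "p \<ge> 1" and Lp: "Lp \<ge> 0"
    and AS3: "\<forall>y z. tnorm p (\<lambda>vs. D p y vs - D p z vs) \<le> Lp * norm (y - z)"
  shows "f (x + s) \<le> (\<Sum>j\<le>p. D j x (\<lambda>_. s) / fact j) + Lp * norm s ^ (p+1) / fact (p+1)"
proof -
  define a where "a j = (if j \<le> p then D j x (\<lambda>_. s) else Lp * norm s ^ (p+1))" for j
  define P where "P m t = (\<Sum>j\<le>p+1-m. a (j+m) * t ^ j / fact j)" for m t
  define \<psi> where "\<psi> m t = D m (x + t *\<^sub>R s) (\<lambda>_. s) - P m t" for m t
  have Pd: "DERIV (P m) t :> P (Suc m) t" if "m < p" for m t
  proof -
    have "DERIV (P m) t :> (\<Sum>j<p+1-m. a (Suc j + m) * t ^ j / fact j)"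
      unfolding P_def by (rule poly_deriv)
    moreover have "(\<Sum>j<p+1-m. a (Suc j + m) * t ^ j / fact j) = P (Suc m) t"
    proof -
      have "{..<p+1-m} = {..p+1 - Suc m}" using that by auto
      then show ?thesis unfolding P_def by simp
    qed
    ultimately show ?thesis by simp
  qed
  have \<psi>d: "\<forall>m t. m < p \<and> 0 \<le> t \<and> t \<le> 1 \<longrightarrow> DERIV (\<psi> m) t :> \<psi> (Suc m) t"
  proof (intro allI impI)
    fix m :: nat and t :: real assume "m < p \<and> 0 \<le> t \<and> t \<le> 1"
    hence m: "m < p" by simp
    show "DERIV (\<psi> m) t :> \<psi> (Suc m) t"
      unfolding \<psi>_def[abs_def]
      by (rule DERIV_diff[OF tower_line_deriv[OF DT m] Pd[OF m]])
  qed
  obtain \<xi> where \<xi>: "0 < \<xi>" "\<xi> < 1"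
    and T: "\<psi> 0 1 = (\<Sum>m<p. (\<psi> m 0 / fact m) * (1 - 0)^m) + (\<psi> p \<xi> / fact p) * (1 - 0)^p"
    using Taylor_up[of p \<psi> "\<psi> 0" 0 1 0, OF _ refl \<psi>d] p1 by auto
  have P0: "P m 0 = a m" for m
    unfolding P_def using sum_zero_pow[of "\<lambda>j. a (j + m)"] by simp
  have z: "\<psi> m 0 = 0" if "m < p" for m
    using that unfolding \<psi>_def P0 a_def by simp
  have "(\<Sum>m<p. (\<psi> m 0 / fact m) * (1 - 0)^m) = 0" using z by simp
  hence T2: "\<psi> 0 1 = \<psi> p \<xi> / fact p" using T by simp
  let ?y = "x + \<xi> *\<^sub>R s"
  have Pp: "P p \<xi> = D p x (\<lambda>_. s) + Lp * norm s ^ (p+1) * \<xi>"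
    unfolding P_def a_def by simp
  obtain dy: "ml_dep p (D p ?y)" "ml_lin p (D p ?y)" and dx: "ml_dep p (D p x)" "ml_lin p (D p x)"
    using tower_struct[OF DT, of p] by auto
  have "D p ?y (\<lambda>_. s) - D p x (\<lambda>_. s) \<le> tnorm p (\<lambda>vs. D p ?y vs - D p x vs) * norm s ^ p"
    using ml_tnorm2[OF ml_diff[OF dy dx], of s] by simp
  also have "\<dots> \<le> Lp * norm (?y - x) * norm s ^ p"
    using AS3 by (intro mult_right_mono) (blast, simp)
  also have "\<dots> = Lp * norm s ^ (p+1) * \<xi>" using \<xi> by simp
  finally have "\<psi> p \<xi> \<le> 0" unfolding \<psi>_def Pp by simp
  hence "\<psi> 0 1 \<le> 0" using T2 by (simp add: divide_nonpos_pos)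
  moreover have "P 0 1 = (\<Sum>j\<le>p. D j x (\<lambda>_. s) / fact j) + Lp * norm s ^ (p+1) / fact (p+1)"
    unfolding P_def a_def by simp
  moreover have "D 0 (x + s) (\<lambda>_. s) = f (x + s)" using DT by (simp add: deriv_tower_def)
  ultimately show ?thesis unfolding \<psi>_def by simp
qed

lemma grad_bound:
  fixes D :: "nat \<Rightarrow> real^'n \<Rightarrow> (nat \<Rightarrow> real^'n) \<Rightarrow> real"
  assumes DT: "deriv_tower p f D" and p1: "p \<ge> 1" and g: "norm (grad f x) \<le> kg"
  shows "D 1 x (\<lambda>_. s) \<ge> - kg * norm s"
proof -
  let ?L = "\<lambda>h. D 1 x ((\<lambda>_. s)(0 := h))"
  have A: "\<forall>i<p. \<forall>x vs. ((\<lambda>y. D i y vs) has_derivative (\<lambda>h. D (Suc i) x (vs(i := h)))) (at x)"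
    using DT unfolding deriv_tower_def by blast
  have der0: "((\<lambda>z. D 0 z (\<lambda>_. s)) has_derivative ?L) (at x)"
    using A p1 by simp
  have "(\<lambda>z. D 0 z (\<lambda>_. s)) = f" using DT by (simp add: deriv_tower_def fun_eq_iff)
  hence der: "(f has_derivative ?L) (at x)" using der0 by simp
  have lin: "linear ?L" using has_derivative_linear[OF der] .
  define G where "G = (\<Sum>b\<in>(Basis::(real^'n) set). ?L b *\<^sub>R b)"
  have LG: "?L h = inner h G" for h
  proof -
    have "?L h = ?L (\<Sum>b\<in>Basis. (h \<bullet> b) *\<^sub>R b)" by (simp add: euclidean_representation)
    also have "\<dots> = (\<Sum>b\<in>Basis. ?L ((h \<bullet> b) *\<^sub>R b))"
      using linear_sum[OF lin, of "\<lambda>b. (h \<bullet> b) *\<^sub>R b" Basis] by simp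
    also have "\<dots> = (\<Sum>b\<in>Basis. (h \<bullet> b) * ?L b)"
      by (rule sum.cong) (use linear_scale[OF lin] in simp_all)
    also have "\<dots> = inner h G" unfolding G_def by (simp add: inner_sum_right mult.commute)
    finally show ?thesis .
  qed
  have gd: "GDERIV f x :> G" unfolding gderiv_def using der LG by simp
  have "grad f x = G" unfolding grad_def
  proof (rule the_equality)
    fix G' assume "GDERIV f x :> G'"
    hence "(\<lambda>h. inner h G') = (\<lambda>h. inner h G)"
      using has_derivative_unique gd unfolding gderiv_def by blast
    then show "G' = G" by (metis vector_eq_ldot)
  qed (rule gd)
  hence "norm G \<le> kg" using g by simp
  have "(\<lambda>_. s)(0 := s) = (\<lambda>_::nat. s)" by auto
  hence "?L s = D 1 x (\<lambda>_. s)" by simp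
  hence "D 1 x (\<lambda>_. s) = inner s G" using LG by simp
  moreover have "inner s G \<ge> - (norm s * norm G)"
    using norm_cauchy_schwarz[of "-s" G] by simp
  moreover have "norm s * norm G \<le> norm s * kg" using \<open>norm G \<le> kg\<close> by (simp add: mult_left_mono)
  ultimately show ?thesis by (simp add: mult.commute)
qed

lemma geom_half:
  assumes "p \<ge> 1"
  shows "(\<Sum>i=2..p. (1/2::real) ^ (p - i + 1)) = 1 - (1/2) ^ (p - 1)"
  using assms
proof (induction p rule: dec_induct)
  case base then show ?case by simp
next
  case (step p)
  have "(\<Sum>i=2..Suc p. (1/2::real) ^ (Suc p - i + 1)) = (\<Sum>i=2..p. (1/2::real) ^ (Suc p - i + 1)) + 1/2"
    using step.hyps by (simp add: sum.cl_ivl_Suc)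
  also have "(\<Sum>i=2..p. (1/2::real) ^ (Suc p - i + 1)) = (\<Sum>i=2..p. (1/2) * (1/2::real) ^ (p - i + 1))"
    by (rule sum.cong) (auto simp: Suc_diff_le)
  also have "\<dots> = (1/2) * (1 - (1/2) ^ (p - 1))" by (subst sum_distrib_left[symmetric]) (simp only: step.IH)
  finally show ?case using step.hyps by (cases p) auto
qed

lemma powr_pow_inv:
  fixes c :: real
  assumes "c \<ge> 0" "k \<ge> 1"
  shows "(c powr (1 / real k)) ^ k = c"
proof (cases "c = 0")
  case True then show ?thesis using assms by simp
next
  case False
  hence cp: "c > 0" using assms by simp
  have "(c powr (1 / real k)) ^ k = (c powr (1 / real k)) powr real k"
    by (rule powr_realpow[symmetric]) (use cp in simp)
  also have "\<dots> = c" using assms by (simp add: powr_powr)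
  finally show ?thesis .
qed

lemma root_bound:
  fixes t A :: real and c :: "nat \<Rightarrow> real"
  assumes p1: "p \<ge> 1" and t: "t \<ge> 0" and A: "A \<ge> 0" and c: "\<And>i. i \<in> {2..p} \<Longrightarrow> c i \<ge> 0"
    and ineq: "t ^ p \<le> A + (\<Sum>i=2..p. c i * t ^ (i - 1))"
  shows "t \<le> 2 * (\<Sum>i=2..p. c i powr (1 / real (p - i + 1))) + 2 * A powr (1 / real p)"
proof (rule ccontr)
  let ?\<eta> = "\<Sum>i=2..p. c i powr (1 / real (p - i + 1))"
  assume "\<not> ?thesis"
  hence lt: "2 * ?\<eta> + 2 * A powr (1 / real p) < t" by simp
  have \<eta>0: "?\<eta> \<ge> 0" by (intro sum_nonneg) simp
  have Ap: "A powr (1 / real p) \<ge> 0" by simp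
  have tpos: "t > 0" using lt \<eta>0 Ap by linarith
  have ci: "c i * t ^ (i - 1) \<le> t ^ p * (1/2) ^ (p - i + 1)" if i: "i \<in> {2..p}" for i
  proof -
    let ?k = "p - i + 1"
    have "c i powr (1 / real ?k) \<le> ?\<eta>"
      by (rule member_le_sum[OF i]) (auto)
    hence r: "c i powr (1 / real ?k) \<le> t / 2" using lt Ap by linarith
    have "c i = (c i powr (1 / real ?k)) ^ ?k" using powr_pow_inv[of "c i" ?k] c[OF i] by simp
    also have "\<dots> \<le> (t / 2) ^ ?k" by (rule power_mono[OF r]) simp
    finally have "c i * t ^ (i - 1) \<le> (t / 2) ^ ?k * t ^ (i - 1)" by (rule mult_right_mono) (use t in simp)
    also have "\<dots> = t ^ (?k + (i - 1)) * (1/2) ^ ?k" by (simp add: power_add power_divide field_simps)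
    also have "?k + (i - 1) = p" using i by auto
    finally show ?thesis .
  qed
  have Alt: "A < t ^ p * (1/2) ^ p"
  proof -
    have r: "A powr (1 / real p) < t / 2" using lt \<eta>0 by linarith
    have "A = (A powr (1 / real p)) ^ p" using powr_pow_inv[of A p] A p1 by simp
    also have "\<dots> < (t / 2) ^ p" by (rule power_strict_mono[OF r]) (use p1 in auto)
    also have "\<dots> = t ^ p * (1/2) ^ p" by (simp add: power_divide)
    finally show ?thesis .
  qed
  have "t ^ p < t ^ p * (1/2) ^ p + (\<Sum>i=2..p. t ^ p * (1/2) ^ (p - i + 1))"
  proof -
    have "(\<Sum>i=2..p. c i * t ^ (i - 1)) \<le> (\<Sum>i=2..p. t ^ p * (1/2) ^ (p - i + 1))"
      by (rule sum_mono) (rule ci)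
    then show ?thesis using ineq Alt by linarith
  qed
  also have "\<dots> = t ^ p * ((1/2) ^ p + (1 - (1/2) ^ (p - 1)))"
  proof -
    have "(\<Sum>i=2..p. t ^ p * (1/2) ^ (p - i + 1)) = t ^ p * (\<Sum>i=2..p. (1/2) ^ (p - i + 1))"
      by (rule sum_distrib_left[symmetric])
    also have "\<dots> = t ^ p * (1 - (1/2) ^ (p - 1))" by (simp only: geom_half[OF p1])
    finally show ?thesis by (simp add: distrib_left)
  qed
  also have "\<dots> \<le> t ^ p"
  proof -
    have "(1/2::real) ^ p \<le> (1/2) ^ (p - 1)" by (rule power_decreasing) auto
    then show ?thesis using tpos by (simp add: mult_left_le)
  qed
  finally show False by simp
qed

lemma tower_zero:
  fixes D :: "nat \<Rightarrow> real^'n \<Rightarrow> (nat \<Rightarrow> real^'n) \<Rightarrow> real"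
  assumes DT: "deriv_tower p f D" and i: "1 \<le> i" "i \<le> p"
  shows "D i y (\<lambda>_. 0) = 0"
proof -
  obtain d: "ml_dep i (D i y)" "ml_lin i (D i y)" using tower_struct[OF DT i(2)] by auto
  have "D i y (\<lambda>_. (0::real) *\<^sub>R 0) = 0 ^ i * D i y (\<lambda>_. 0)" by (rule ml_homog[OF d])
  then show ?thesis using i by (simp add: power_0_left)
qed

lemma hi_bound:
  fixes D :: "nat \<Rightarrow> real^'n \<Rightarrow> (nat \<Rightarrow> real^'n) \<Rightarrow> real"
  assumes DT: "deriv_tower p f D" and i: "1 \<le> i" "i \<le> p" and kh: "kh \<ge> 0"
    and h: "\<forall>d. norm d \<le> 1 \<longrightarrow> D i y (\<lambda>_. d) \<ge> - kh"
  shows "D i y (\<lambda>_. s) \<ge> - kh * norm s ^ i"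
proof (cases "s = 0")
  case True then show ?thesis using tower_zero[OF DT i] i by (simp add: power_0_left)
next
  case False
  obtain d: "ml_dep i (D i y)" "ml_lin i (D i y)" using tower_struct[OF DT i(2)] by auto
  let ?u = "(1 / norm s) *\<^sub>R s"
  have "D i y (\<lambda>_. s) = D i y (\<lambda>_. norm s *\<^sub>R ?u)" using False by simp
  also have "\<dots> = norm s ^ i * D i y (\<lambda>_. ?u)" by (rule ml_homog[OF d])
  finally have e: "D i y (\<lambda>_. s) = norm s ^ i * D i y (\<lambda>_. ?u)" .
  have "D i y (\<lambda>_. ?u) \<ge> - kh" using h False by simp
  hence "norm s ^ i * D i y (\<lambda>_. ?u) \<ge> norm s ^ i * (- kh)" by (rule mult_left_mono) simp
  then show ?thesis using e by (simp add: mult.commute)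
qed

lemma taylor_eq:
  fixes D :: "nat \<Rightarrow> real^'n \<Rightarrow> (nat \<Rightarrow> real^'n) \<Rightarrow> real"
  assumes DT: "deriv_tower p f D"
  shows "taylor p f D x s = (\<Sum>j\<le>p. D j x (\<lambda>_. s) / fact j)"
proof -
  have "(\<Sum>j\<le>p. D j x (\<lambda>_. s) / fact j) = (\<Sum>j=0..p. D j x (\<lambda>_. s) / fact j)"
    by (simp add: atMost_atLeast0)
  also have "\<dots> = D 0 x (\<lambda>_. s) / fact 0 + (\<Sum>j=Suc 0..p. D j x (\<lambda>_. s) / fact j)"
    by (rule sum.atLeast_Suc_atMost) simp
  also have "D 0 x (\<lambda>_. s) = f x" using DT by (simp add: deriv_tower_def)
  finally show ?thesis unfolding taylor_def by simp
qed

lemma taylor_zero: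
  fixes D :: "nat \<Rightarrow> real^'n \<Rightarrow> (nat \<Rightarrow> real^'n) \<Rightarrow> real"
  assumes DT: "deriv_tower p f D"
  shows "taylor p f D x 0 = f x"
  unfolding taylor_def using tower_zero[OF DT] by simp

lemma one_step:
  fixes D :: "nat \<Rightarrow> real^'n \<Rightarrow> (nat \<Rightarrow> real^'n) \<Rightarrow> real"
  assumes DT: "deriv_tower p f D" and p1: "p \<ge> 1" and Lp: "Lp \<ge> 0"
    and AS3: "\<forall>y z. tnorm p (\<lambda>vs. D p y vs - D p z vs) \<le> Lp * norm (y - z)"
    and kg: "\<kappa>g \<ge> 0" "\<forall>y. norm (grad f y) \<le> \<kappa>g"
    and kh: "\<kappa>high \<ge> 0"
      "p > 1 \<Longrightarrow> \<forall>y. \<forall>i\<in>{2..p}. \<forall>d. norm d \<le> 1 \<longrightarrow> D i y (\<lambda>_. d) \<ge> - \<kappa>high"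
    and dec: "taylor p f D x s + \<sigma> / fact (p+1) * norm s ^ (p+1) < f x"
    and sig: "\<sigma> \<ge> vth * \<nu>0" and vth: "vth > 0" and nu0: "\<nu>0 > 0"
  shows "f (x + s) \<le> f x + (Lp - \<sigma>) * norm s ^ (p+1) / fact (p+1)"
    and "norm s \<le> 2 * (\<Sum>i=2..p. (\<kappa>high * fact (p+1) / (fact i * vth * \<nu>0)) powr (1 / real (p - i + 1)))
                    + 2 * (fact (p+1) * \<kappa>g / (vth * \<nu>0)) powr (1 / real p)"
proof -
  let ?F = "fact (p+1) :: real"
  let ?t = "norm s"
  have F0: "?F > 0" by simp
  have "f (x + s) \<le> (\<Sum>j\<le>p. D j x (\<lambda>_. s) / fact j) + Lp * ?t ^ (p+1) / ?F"
    by (rule taylor_bound[OF DT p1 Lp AS3])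
  also have "(\<Sum>j\<le>p. D j x (\<lambda>_. s) / fact j) = taylor p f D x s" by (rule taylor_eq[OF DT, symmetric])
  finally have "f (x + s) \<le> taylor p f D x s + Lp * ?t ^ (p+1) / ?F" .
  with dec show "f (x + s) \<le> f x + (Lp - \<sigma>) * ?t ^ (p+1) / ?F"
    by (simp add: diff_divide_distrib left_diff_distrib)
  \<comment> \<open>lower bound on the Taylor terms\<close>
  have hi: "D i x (\<lambda>_. s) \<ge> - \<kappa>high * ?t ^ i" if i: "i \<in> {2..p}" for i
  proof -
    have "p > 1" using i by auto
    hence hh: "\<forall>d. norm d \<le> 1 \<longrightarrow> D i x (\<lambda>_. d) \<ge> - \<kappa>high" using kh(2) i by blast
    show ?thesis by (rule hi_bound[OF DT _ _ kh(1) hh]) (use i in auto)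
  qed
  have g1: "D 1 x (\<lambda>_. s) \<ge> - \<kappa>g * ?t" by (rule grad_bound[OF DT p1]) (use kg in auto)
  have "taylor p f D x s = f x + (D 1 x (\<lambda>_. s) / fact 1 + (\<Sum>i=2..p. D i x (\<lambda>_. s) / fact i))"
    unfolding taylor_def using sum.atLeast_Suc_atMost[OF p1, of "\<lambda>i. D i x (\<lambda>_. s) / fact i"]
    by (simp add: numeral_2_eq_2)
  moreover have "(\<Sum>i=2..p. D i x (\<lambda>_. s) / fact i) \<ge> (\<Sum>i=2..p. - (\<kappa>high * ?t ^ i / fact i))"
  proof (rule sum_mono)
    fix i assume i: "i \<in> {2..p}"
    have "- (\<kappa>high * ?t ^ i) / fact i \<le> D i x (\<lambda>_. s) / fact i"
      by (rule divide_right_mono) (use hi[OF i] in auto)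
    then show "- (\<kappa>high * ?t ^ i / fact i) \<le> D i x (\<lambda>_. s) / fact i" by simp
  qed
  ultimately have ineq: "\<sigma> / ?F * ?t ^ (p+1) < \<kappa>g * ?t + (\<Sum>i=2..p. \<kappa>high * ?t ^ i / fact i)"
    using dec g1 by (simp add: sum_negf)
  define R where "R = \<kappa>g + (\<Sum>i=2..p. \<kappa>high * ?t ^ (i - 1) / fact i)"
  have R0: "R \<ge> 0" unfolding R_def using kg kh by (intro add_nonneg_nonneg sum_nonneg) auto
  have tR: "?t * R = \<kappa>g * ?t + (\<Sum>i=2..p. \<kappa>high * ?t ^ i / fact i)"
  proof -
    have "?t * (\<Sum>i=2..p. \<kappa>high * ?t ^ (i - 1) / fact i) = (\<Sum>i=2..p. \<kappa>high * ?t ^ i / fact i)"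
      unfolding sum_distrib_left
    proof (rule sum.cong)
      fix i assume "i \<in> {2..p}"
      hence "?t ^ i = ?t * ?t ^ (i - 1)" by (cases i) auto
      then show "?t * (\<kappa>high * ?t ^ (i - 1) / fact i) = \<kappa>high * ?t ^ i / fact i" by simp
    qed simp
    then show ?thesis unfolding R_def by (simp add: distrib_left mult.commute)
  qed
  have tpos: "?t > 0"
  proof (rule ccontr)
    assume "\<not> ?t > 0"
    hence "?t = 0" by simp
    hence "?t * R = 0" by simp
    moreover have "\<sigma> / ?F * ?t ^ (p+1) = 0" using \<open>?t = 0\<close> by simp
    ultimately show False using ineq tR by linarith
  qed
  have "\<sigma> / ?F * ?t ^ (p+1) < ?t * R" using ineq tR by simp
  hence X: "?t * (\<sigma> / ?F * ?t ^ p) < ?t * R" by (simp add: ac_simps)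
  have "\<sigma> / ?F * ?t ^ p < R" using X mult_less_cancel_left_pos[OF tpos] by blast
  hence "\<sigma> * ?t ^ p < ?F * R" using F0 by (simp add: field_simps)
  moreover have "vth * \<nu>0 * ?t ^ p \<le> \<sigma> * ?t ^ p" using sig by (simp add: mult_right_mono)
  ultimately have "vth * \<nu>0 * ?t ^ p < ?F * R" by linarith
  hence "?t ^ p < ?F * R / (vth * \<nu>0)" using vth nu0 by (simp add: field_simps)
  also have "?F * R / (vth * \<nu>0) = ?F * \<kappa>g / (vth * \<nu>0) +
      (\<Sum>i=2..p. \<kappa>high * ?F / (fact i * vth * \<nu>0) * ?t ^ (i - 1))"
  proof -
    define K where "K = ?F / (vth * \<nu>0)"
    have "?F * R / (vth * \<nu>0) = K * R" unfolding K_def by simp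
    also have "\<dots> = K * \<kappa>g + (\<Sum>i=2..p. K * (\<kappa>high * ?t ^ (i - 1) / fact i))"
      unfolding R_def by (simp add: distrib_left sum_distrib_left)
    also have "(\<Sum>i=2..p. K * (\<kappa>high * ?t ^ (i - 1) / fact i)) = (\<Sum>i=2..p. \<kappa>high * ?F / (fact i * vth * \<nu>0) * ?t ^ (i - 1))"
      unfolding K_def by (rule sum.cong) (simp_all add: ac_simps)
    finally show ?thesis unfolding K_def by simp
  qed
  finally have main: "?t ^ p \<le> ?F * \<kappa>g / (vth * \<nu>0) + (\<Sum>i=2..p. \<kappa>high * ?F / (fact i * vth * \<nu>0) * ?t ^ (i - 1))"
    by simp
  show "?t \<le> 2 * (\<Sum>i=2..p. (\<kappa>high * ?F / (fact i * vth * \<nu>0)) powr (1 / real (p - i + 1)))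
                    + 2 * (?F * \<kappa>g / (vth * \<nu>0)) powr (1 / real p)"
    by (rule root_bound[OF p1 _ _ _ main]) (use kg kh vth nu0 in auto)
qed

theorem mainTheorem5:
  fixes f :: "real^'n \<Rightarrow> real"
    and D :: "nat \<Rightarrow> real^'n \<Rightarrow> (nat \<Rightarrow> real^'n) \<Rightarrow> real"
    and S :: "nat \<Rightarrow> real^'n^'l"
    and sh :: "nat \<Rightarrow> real^'l"
    and x :: "nat \<Rightarrow> real^'n"
    and \<sigma> \<nu> \<mu> \<kappa>S :: "nat \<Rightarrow> real"
    and p :: nat and Lp \<kappa>g \<kappa>high \<nu>0 \<epsilon> \<theta> vth :: real
  assumes p1: "p \<ge> 1"
    and dims: "CARD('l) < CARD('n)"
    and AS1: "AS1 p f D"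
    and AS3: "Lp \<ge> 0" "\<forall>y z. tnorm p (\<lambda>vs. D p y vs - D p z vs) \<le> Lp * norm (y - z)"
    and AS4: "\<kappa>g \<ge> 0" "\<forall>y. norm (grad f y) \<le> \<kappa>g"
    and AS5: "\<kappa>high \<ge> 0" "p = 1 \<Longrightarrow> \<kappa>high = 0"
      "p > 1 \<Longrightarrow> \<forall>y. \<forall>i\<in>{2..p}. \<forall>d. norm d \<le> 1 \<longrightarrow> D i y (\<lambda>_. d) \<ge> - \<kappa>high"
    and run: "skoffar_run p f D \<nu>0 \<epsilon> \<theta> vth x \<sigma> \<nu> \<mu> \<kappa>S S sh"
    and K1: "\<exists>k\<ge>1. \<nu> k \<ge> 2 * Lp / vth"
  shows "let k1 = (LEAST k. k \<ge> 1 \<and> \<nu> k \<ge> 2 * Lp / vth);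
             \<eta> = (\<Sum>i=2..p. (\<kappa>high * fact (p+1) / (fact i * vth * \<nu>0)) powr (1 / real (p - i + 1)));
             \<nu>max = 2 * Lp / vth * (1 + (2 * \<eta> + 2 * (fact (p+1) * \<kappa>g / (vth * \<nu>0)) powr (1 / real p)) ^ (p+1))
         in f (x k1) \<le> f (x 0) + 1 / fact (p+1) * (Lp / \<sigma> 0 * \<nu>max + vth * \<sigma> 0)"
proof -
  let ?F = "fact (p+1) :: real"
  define s where "s k = transpose (S k) *v sh k" for k
  define \<eta> where "\<eta> = (\<Sum>i=2..p. (\<kappa>high * fact (p+1) / (fact i * vth * \<nu>0)) powr (1 / real (p - i + 1)))"
  define Tb where "Tb = 2 * \<eta> + 2 * (fact (p+1) * \<kappa>g / (vth * \<nu>0)) powr (1 / real p)"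
  define \<nu>max where "\<nu>max = 2 * Lp / vth * (1 + Tb ^ (p+1))"
  define k1 where "k1 = (LEAST k. k \<ge> 1 \<and> \<nu> k \<ge> 2 * Lp / vth)"
  have DT: "deriv_tower p f D" using AS1 by (simp add: AS1_def)
  have R: "\<nu>0 > 0" "0 < vth" "vth < 1" "\<nu> 0 = \<nu>0" "\<sigma> 0 = \<nu>0"
    "\<And>k. k \<ge> 1 \<Longrightarrow> vth * \<nu> k \<le> \<sigma> k"
    "\<And>k. sk_model p f D (x k) (S k) (\<sigma> k) (sh k) < sk_model p f D (x k) (S k) (\<sigma> k) 0"
    "\<And>k. x (Suc k) = x k + s k"
    "\<And>k. \<nu> (Suc k) = \<nu> k + \<nu> k * norm (s k) ^ (p+1)"
    using run unfolding skoffar_run_def s_def by blast+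
  have nu_ge: "\<nu> k \<ge> \<nu>0" for k
  proof (induction k)
    case 0 then show ?case using R by simp
  next
    case (Suc k)
    have "\<nu> k * norm (s k) ^ (p+1) \<ge> 0" using Suc R(1) by simp
    then show ?case using Suc R(9)[of k] by simp
  qed
  have sig_ge: "\<sigma> k \<ge> vth * \<nu>0" for k
  proof (cases "k = 0")
    case True then show ?thesis using R by simp
  next
    case False
    hence "vth * \<nu> k \<le> \<sigma> k" using R(6) by simp
    moreover have "vth * \<nu>0 \<le> vth * \<nu> k" using nu_ge[of k] R(2) by simp
    ultimately show ?thesis by simp
  qed
  have dec: "taylor p f D (x k) (s k) + \<sigma> k / ?F * norm (s k) ^ (p+1) < f (x k)" for k
    using R(7)[of k] taylor_zero[OF DT, of "x k"]
    unfolding sk_model_def sk_taylor_def s_def by simp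
  have step: "f (x (Suc k)) \<le> f (x k) + (Lp - \<sigma> k) * norm (s k) ^ (p+1) / ?F"
   and sb: "norm (s k) \<le> Tb" for k
    using one_step[OF DT p1 AS3(1) AS3(2) AS4(1) AS4(2) AS5(1) AS5(3) dec sig_ge R(2) R(1)] R(8)[of k]
    unfolding Tb_def \<eta>_def by auto
  have F0: "?F > 0" by simp
  have Tb0: "Tb \<ge> 0" using sb[of 0] by (meson norm_ge_zero order_trans)
  have cum: "f (x m) \<le> f (x 0) + Lp / \<nu>0 * (\<nu> m - \<nu>0) / ?F" for m
  proof (induction m)
    case 0 then show ?case using R by simp
  next
    case (Suc m)
    let ?q = "norm (s m) ^ (p+1)"
    have q0: "?q \<ge> 0" by simp
    have "(Lp - \<sigma> m) * ?q \<le> Lp * ?q"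
      using sig_ge[of m] R(1,2) q0 by (intro mult_right_mono) (auto intro: mult_pos_pos order_trans[rotated])
    also have "Lp * ?q \<le> Lp / \<nu>0 * (\<nu> (Suc m) - \<nu> m)"
    proof -
      have "Lp * ?q = Lp / \<nu>0 * (\<nu>0 * ?q)" using R(1) by simp
      also have "\<dots> \<le> Lp / \<nu>0 * (\<nu> m * ?q)"
        by (rule mult_left_mono) (use nu_ge[of m] q0 AS3(1) R(1) in \<open>auto simp: mult_right_mono\<close>)
      also have "\<dots> = Lp / \<nu>0 * (\<nu> (Suc m) - \<nu> m)" using R(9)[of m] by simp
      finally show ?thesis .
    qed
    finally have X: "(Lp - \<sigma> m) * ?q \<le> Lp / \<nu>0 * (\<nu> (Suc m) - \<nu> m)" .
    have "(Lp - \<sigma> m) * ?q / ?F \<le> Lp / \<nu>0 * (\<nu> (Suc m) - \<nu> m) / ?F"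
      by (rule divide_right_mono[OF X]) (use F0 in simp)
    moreover have "Lp / \<nu>0 * (\<nu> (Suc m) - \<nu>0) / ?F = Lp / \<nu>0 * (\<nu> m - \<nu>0) / ?F + Lp / \<nu>0 * (\<nu> (Suc m) - \<nu> m) / ?F"
    proof -
      have "Lp / \<nu>0 * (\<nu> (Suc m) - \<nu>0) = Lp / \<nu>0 * (\<nu> m - \<nu>0) + Lp / \<nu>0 * (\<nu> (Suc m) - \<nu> m)"
        by (simp add: algebra_simps)
      then show ?thesis by (simp only: add_divide_distrib)
    qed
    ultimately show ?case using step[of m] Suc.IH by linarith
  qed
  have K: "k1 \<ge> 1 \<and> \<nu> k1 \<ge> 2 * Lp / vth"
    unfolding k1_def using K1 by (rule LeastI_ex)
  have below: "\<nu> k < 2 * Lp / vth" if "1 \<le> k" "k < k1" for k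
    using not_less_Least[OF that(2)[unfolded k1_def]] that(1) by auto
  have nm0: "Lp / \<nu>0 * \<nu>max \<ge> 0" unfolding \<nu>max_def using AS3(1) R(1,2) Tb0 by simp
  have final: "f (x k1) \<le> f (x 0) + Lp / \<nu>0 * \<nu>max / ?F"
  proof (cases "k1 = 1")
    case True
    let ?q = "norm (s 0) ^ (p+1)"
    have f1: "f (x 1) \<le> f (x 0) + (Lp - \<nu>0) * ?q / ?F" using step[of 0] R(5) by simp
    show ?thesis
    proof (cases "Lp \<le> \<nu>0")
      case True
      hence "(Lp - \<nu>0) * ?q \<le> 0" by (simp add: mult_nonpos_nonneg)
      hence "(Lp - \<nu>0) * ?q / ?F \<le> 0" using F0 by (simp add: divide_nonpos_pos)
      moreover have "Lp / \<nu>0 * \<nu>max / ?F \<ge> 0" using nm0 F0 by (intro divide_nonneg_pos)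
      ultimately show ?thesis using f1 \<open>k1 = 1\<close> by simp
    next
      case False
      have q: "?q \<le> Tb ^ (p+1)" by (rule power_mono[OF sb[of 0]]) simp
      have "(Lp - \<nu>0) * ?q \<le> Lp * Tb ^ (p+1)"
        using False R(1) q by (intro mult_mono) auto
      also have "\<dots> \<le> Lp / \<nu>0 * \<nu>max"
      proof -
        have a: "Lp / \<nu>0 \<ge> 1" using False R(1) by simp
        have b: "2 * Lp / vth \<ge> Lp"
        proof -
          have "Lp * vth \<le> Lp * 2" using R(2,3) AS3(1) by (intro mult_left_mono) auto
          then show ?thesis using R(2) by (simp add: field_simps)
        qed
        have "Lp \<le> Lp / \<nu>0 * (2 * Lp / vth)"
          using mult_mono[OF a b] AS3(1) R(1) by simp
        moreover have "Tb ^ (p+1) \<le> 1 + Tb ^ (p+1)" by simp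
        ultimately have "Lp * Tb ^ (p+1) \<le> Lp / \<nu>0 * (2 * Lp / vth) * (1 + Tb ^ (p+1))"
          using Tb0 AS3(1) by (intro mult_mono) auto
        then show ?thesis unfolding \<nu>max_def by (simp add: ac_simps)
      qed
      finally have X: "(Lp - \<nu>0) * ?q \<le> Lp / \<nu>0 * \<nu>max" .
      have "(Lp - \<nu>0) * ?q / ?F \<le> Lp / \<nu>0 * \<nu>max / ?F"
        by (rule divide_right_mono[OF X]) (use F0 in simp)
      then show ?thesis using f1 \<open>k1 = 1\<close> by simp
    qed
  next
    case False
    hence k2: "k1 \<ge> 2" using K by simp
    define j where "j = k1 - 1"
    have j: "1 \<le> j" "j < k1" "Suc j = k1" using k2 unfolding j_def by auto
    have nj: "\<nu> j < 2 * Lp / vth" using below[OF j(1) j(2)] .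
    have "\<nu> k1 = \<nu> j * (1 + norm (s j) ^ (p+1))" using R(9)[of j] j(3) by (simp add: distrib_left)
    also have "\<dots> \<le> 2 * Lp / vth * (1 + Tb ^ (p+1))"
      using nj nu_ge[of j] R(1) power_mono[OF sb[of j] norm_ge_zero, of "p+1"] by (intro mult_mono) auto
    finally have "\<nu> k1 \<le> \<nu>max" unfolding \<nu>max_def .
    hence "Lp / \<nu>0 * (\<nu> k1 - \<nu>0) \<le> Lp / \<nu>0 * \<nu>max"
      using AS3(1) R(1) by (intro mult_left_mono) auto
    hence "Lp / \<nu>0 * (\<nu> k1 - \<nu>0) / ?F \<le> Lp / \<nu>0 * \<nu>max / ?F"
      by (rule divide_right_mono) (use F0 in simp)
    then show ?thesis using cum[of k1] by simp
  qed
  have "f (x k1) \<le> f (x 0) + 1 / ?F * (Lp / \<sigma> 0 * \<nu>max + vth * \<sigma> 0)"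
  proof -
    have "vth * \<sigma> 0 / ?F \<ge> 0" using R by simp
    moreover have "1 / ?F * (Lp / \<sigma> 0 * \<nu>max + vth * \<sigma> 0) = Lp / \<nu>0 * \<nu>max / ?F + vth * \<sigma> 0 / ?F"
      using R(5) by (simp add: add_divide_distrib)
    ultimately show ?thesis using final by linarith
  qed
  then show ?thesis unfolding Let_def k1_def \<nu>max_def Tb_def \<eta>_def .
qed

end
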